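(* Let $p,n$ be positive integers, $c=\gcd(p,n)$, $d=n/c$, $y\in\mathbb{Z}_n$, and let $\alpha_k$ ($0\le k\le c-1$) be defined by $\alpha_k(x_i)\equiv y+L(i-1)\,kd\pmod n$, $i=1,\dots,p+1$, where $L(m)$ is the least nonnegative residue of $m$ modulo $p$. Then $\hom(P(\widetilde{\mathcal{T}(p,2)}),(\mathbb{Z}_n,y,y))=\{\alpha_0,\dots,\alpha_{c-1}\}$, these $c$ homomorphisms are pairwise distinct, and hence the pointed quandle counting invariant is $\Phi^{\mathbb{Z}}_{(\mathbb{Z}_n,y,y)}(\widetilde{\mathcal{T}(p,2)})=|\hom(P(\widetilde{\mathcal{T}(p,2)}),(\mathbb{Z}_n,y,y))|=c$.
   Context: $\mathbb{Z}_n$ is the dihedral quandle ($x\triangleright y=2y-x$ mod $n$); $(\mathbb{Z}_n,y,y)$ is the $2$-pointed quandle with both basepoints $y$. $P(\widetilde{\mathcal{T}(p,2)})=(Q,x_1,x_{p+1})$ with $Q=\langle x_1,\dots,x_{p+1}\mid x_p=x_2\triangleright x_{p+1},\ x_i=x_{i+2}\triangleright x_{i+1}\ (1\le i\le p-1)\rangle$, the fundamental pointed quandle of the $1$-linkoid of $(p,2)$-torus type; $\hom$ denotes basepoint-preserving quandle homomorphisms. *)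

theory Defs
  imports Main
begin

datatype 'g qterm = Gen 'g | Tri "'g qterm" "'g qterm" | TriInv "'g qterm" "'g qterm"

fun gens :: "'g qterm \<Rightarrow> 'g set" where
  "gens (Gen g) = {g}"
| "gens (Tri a b) = gens a \<union> gens b"
| "gens (TriInv a b) = gens a \<union> gens b"

inductive qcong :: "('g qterm \<times> 'g qterm) set \<Rightarrow> 'g qterm \<Rightarrow> 'g qterm \<Rightarrow> bool"
  for R where
  refl: "qcong R a a"
| sym: "qcong R a b \<Longrightarrow> qcong R b a"
| trans: "qcong R a b \<Longrightarrow> qcong R b c \<Longrightarrow> qcong R a c"
| cong_tri: "qcong R a a' \<Longrightarrow> qcong R b b' \<Longrightarrow> qcong R (Tri a b) (Tri a' b')"
| cong_triinv: "qcong R a a' \<Longrightarrow> qcong R b b' \<Longrightarrow> qcong R (TriInv a b) (TriInv a' b')"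
| idem: "qcong R (Tri a a) a"
| rinv1: "qcong R (TriInv (Tri a b) b) a"
| rinv2: "qcong R (Tri (TriInv a b) b) a"
| selfdist: "qcong R (Tri (Tri a b) c) (Tri (Tri a c) (Tri b c))"
| rel: "(a, b) \<in> R \<Longrightarrow> qcong R a b"

definition qclass :: "('g qterm \<times> 'g qterm) set \<Rightarrow> 'g qterm \<Rightarrow> 'g qterm set" where
  "qclass R t = {s. qcong R t s}"

definition pq_carrier :: "('g qterm \<times> 'g qterm) set \<Rightarrow> 'g set \<Rightarrow> 'g qterm set set" where
  "pq_carrier R G = {qclass R t | t. gens t \<subseteq> G}"

text \<open>Basepoint-preserving quandle homomorphisms from the 2-pointed presented quandle
  (\<langle>G | R\<rangle>, g1, g2) to the 2-pointed quandle (T, tri, y1, y2); maps are extensional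
  (undefined outside the carrier).\<close>
definition pointed_qhom ::
  "('g qterm \<times> 'g qterm) set \<Rightarrow> 'g set \<Rightarrow> 'g \<Rightarrow> 'g \<Rightarrow> 'b set \<Rightarrow> ('b \<Rightarrow> 'b \<Rightarrow> 'b)
   \<Rightarrow> 'b \<Rightarrow> 'b \<Rightarrow> ('g qterm set \<Rightarrow> 'b) set" where
  "pointed_qhom R G g1 g2 T tri y1 y2 =
    {h. (\<forall>C\<in>pq_carrier R G. h C \<in> T)
      \<and> (\<forall>C. C \<notin> pq_carrier R G \<longrightarrow> h C = undefined)
      \<and> (\<forall>a b. gens a \<subseteq> G \<longrightarrow> gens b \<subseteq> G \<longrightarrow>
              h (qclass R (Tri a b)) = tri (h (qclass R a)) (h (qclass R b)))
      \<and> h (qclass R (Gen g1)) = y1 \<and> h (qclass R (Gen g2)) = y2}"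

fun qeval :: "('b \<Rightarrow> 'b \<Rightarrow> 'b) \<Rightarrow> ('b \<Rightarrow> 'b \<Rightarrow> 'b) \<Rightarrow> ('g \<Rightarrow> 'b) \<Rightarrow> 'g qterm \<Rightarrow> 'b" where
  "qeval tri tinv v (Gen g) = v g"
| "qeval tri tinv v (Tri a b) = tri (qeval tri tinv v a) (qeval tri tinv v b)"
| "qeval tri tinv v (TriInv a b) = tinv (qeval tri tinv v a) (qeval tri tinv v b)"

definition ext_hom ::
  "('g qterm \<times> 'g qterm) set \<Rightarrow> 'g set \<Rightarrow> ('b \<Rightarrow> 'b \<Rightarrow> 'b) \<Rightarrow> ('b \<Rightarrow> 'b \<Rightarrow> 'b)
   \<Rightarrow> ('g \<Rightarrow> 'b) \<Rightarrow> 'g qterm set \<Rightarrow> 'b" where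
  "ext_hom R G tri tinv v = (\<lambda>C. if C \<in> pq_carrier R G
      then qeval tri tinv v (SOME t. gens t \<subseteq> G \<and> C = qclass R t) else undefined)"

definition dcarrier :: "nat \<Rightarrow> int set" where
  "dcarrier n = {0..<int n}"

definition dtri :: "nat \<Rightarrow> int \<Rightarrow> int \<Rightarrow> int" where
  "dtri n x y = (2 * y - x) mod int n"

definition torus_rels :: "nat \<Rightarrow> (nat qterm \<times> nat qterm) set" where
  "torus_rels p = {(Gen p, Tri (Gen 2) (Gen (p + 1)))}
     \<union> {(Gen i, Tri (Gen (i + 2)) (Gen (i + 1))) | i. 1 \<le> i \<and> i \<le> p - 1}"

definition torus_gens :: "nat \<Rightarrow> nat set" where
  "torus_gens p = {1..p + 1}"

end

theory Submission imports Defs begin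
lemma m1: "(2 * (X mod n) - Y mod n) mod n = (2*X - Y) mod (n::int)"
proof -
  have "(2 * (X mod n) - Y mod n) mod n = (2 * (X mod n) - Y) mod n" by (rule mod_diff_right_eq)
  also have "\<dots> = ((2 * (X mod n)) mod n - Y) mod n" by (rule mod_diff_left_eq[symmetric])
  also have "(2 * (X mod n)) mod n = (2 * X) mod n" by (rule mod_mult_right_eq)
  also have "((2 * X) mod n - Y) mod n = (2 * X - Y) mod n" by (rule mod_diff_left_eq)
  finally show ?thesis .
qed
lemma m2: "0 < n \<Longrightarrow> X \<in> dcarrier n \<Longrightarrow> dtri n (dtri n X B) B = X"
  by (simp add: dtri_def dcarrier_def mod_diff_right_eq)
lemma m3: "dtri n (dtri n a b) c = dtri n (dtri n a c) (dtri n b c)"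
proof -
  have A: "(2*c - (2*b - a) mod int n) mod int n = (2*c - (2*b-a)) mod int n" by (rule mod_diff_right_eq)
  have B: "(2 * ((2*c - b) mod int n) - (2*c - a) mod int n) mod int n = (2*(2*c - b) - (2*c - a)) mod int n" by (rule m1)
  have C: "2*(2*c - b) - (2*c - a) = 2*c - (2*b-a)" by simp
  show ?thesis unfolding dtri_def by (simp only: A B C)
qed

lemma qeval_range: assumes "0<n" "\<forall>g. v g \<in> dcarrier n"
  shows "qeval (dtri n) (dtri n) v t \<in> dcarrier n"
  using assms by (induction t) (auto simp: dtri_def dcarrier_def)

lemma qcong_sound:
  assumes "qcong R s t" "0<n" "\<forall>g. v g \<in> dcarrier n"
    "\<forall>(a,b)\<in>R. qeval (dtri n) (dtri n) v a = qeval (dtri n) (dtri n) v b"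
  shows "qeval (dtri n) (dtri n) v s = qeval (dtri n) (dtri n) v t"
  using assms(1)
proof induction
  case (idem a)
  have "qeval (dtri n) (dtri n) v a \<in> dcarrier n" by (rule qeval_range[OF assms(2,3)])
  then show ?case unfolding dcarrier_def dtri_def by simp
next
  case (rinv1 a b)
  show ?case using m2[OF assms(2) qeval_range[OF assms(2,3)]] by simp
next
  case (rinv2 a b)
  show ?case using m2[OF assms(2) qeval_range[OF assms(2,3)]] by simp
next
  case (selfdist a b c)
  show ?case using m3 by simp
next
  case (rel a b)
  then show ?case using assms(4) by auto
qed auto

lemma qclass_eq_iff: "qclass R a = qclass R b \<longleftrightarrow> qcong R a b"
proof
  assume "qclass R a = qclass R b"
  moreover have "b \<in> qclass R b" by (simp add: qclass_def qcong.refl)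
  ultimately show "qcong R a b" by (auto simp: qclass_def)
next
  assume h: "qcong R a b"
  show "qclass R a = qclass R b" unfolding qclass_def
    using h qcong.sym qcong.trans by blast
qed

lemma ext_hom_eval:
  assumes "0<n" "\<forall>g. v g \<in> dcarrier n"
    "\<forall>(a,b)\<in>R. qeval (dtri n) (dtri n) v a = qeval (dtri n) (dtri n) v b" "gens t \<subseteq> G"
  shows "ext_hom R G (dtri n) (dtri n) v (qclass R t) = qeval (dtri n) (dtri n) v t"
proof -
  have mem: "qclass R t \<in> pq_carrier R G" using assms(4) by (auto simp: pq_carrier_def)
  have ex: "\<exists>s. gens s \<subseteq> G \<and> qclass R t = qclass R s" using assms(4) by blast
  define s where "s = (SOME s. gens s \<subseteq> G \<and> qclass R t = qclass R s)"
  have "gens s \<subseteq> G \<and> qclass R t = qclass R s" unfolding s_def by (rule someI_ex[OF ex])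
  hence "qcong R t s" by (simp add: qclass_eq_iff)
  hence "qeval (dtri n) (dtri n) v t = qeval (dtri n) (dtri n) v s" by (rule qcong_sound[OF _ assms(1-3)])
  then show ?thesis using mem by (simp add: ext_hom_def s_def)
qed

lemma ext_hom_in:
  assumes "0<n" "\<forall>g. v g \<in> dcarrier n"
    "\<forall>(a,b)\<in>R. qeval (dtri n) (dtri n) v a = qeval (dtri n) (dtri n) v b"
    "v g1 = y1" "v g2 = y2" "g1 \<in> G" "g2 \<in> G"
  shows "ext_hom R G (dtri n) (dtri n) v \<in> pointed_qhom R G g1 g2 (dcarrier n) (dtri n) y1 y2"
proof -
  have E: "\<And>t. gens t \<subseteq> G \<Longrightarrow> ext_hom R G (dtri n) (dtri n) v (qclass R t) = qeval (dtri n) (dtri n) v t"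
    by (rule ext_hom_eval[OF assms(1-3)])
  show ?thesis unfolding pointed_qhom_def
  proof (intro CollectI conjI allI ballI impI)
    fix C assume "C \<in> pq_carrier R G"
    then obtain t where "gens t \<subseteq> G" "C = qclass R t" by (auto simp: pq_carrier_def)
    then show "ext_hom R G (dtri n) (dtri n) v C \<in> dcarrier n"
      using E qeval_range[OF assms(1,2)] by simp
  next
    fix C assume "C \<notin> pq_carrier R G"
    then show "ext_hom R G (dtri n) (dtri n) v C = undefined" by (simp add: ext_hom_def)
  next
    fix a b assume "gens a \<subseteq> G" "gens b \<subseteq> G"
    then show "ext_hom R G (dtri n) (dtri n) v (qclass R (Tri a b)) =
       dtri n (ext_hom R G (dtri n) (dtri n) v (qclass R a)) (ext_hom R G (dtri n) (dtri n) v (qclass R b))"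
      using E[of a] E[of b] E[of "Tri a b"] by simp
  next
    show "ext_hom R G (dtri n) (dtri n) v (qclass R (Gen g1)) = y1" using E[of "Gen g1"] assms by simp
  next
    show "ext_hom R G (dtri n) (dtri n) v (qclass R (Gen g2)) = y2" using E[of "Gen g2"] assms by simp
  qed
qed

lemma hom_unique:
  assumes "0<n" "\<forall>g. v g \<in> dcarrier n"
    "\<forall>(a,b)\<in>R. qeval (dtri n) (dtri n) v a = qeval (dtri n) (dtri n) v b"
    "h \<in> pointed_qhom R G g1 g2 (dcarrier n) (dtri n) y1 y2"
    "\<forall>i\<in>G. h (qclass R (Gen i)) = v i"
  shows "h = ext_hom R G (dtri n) (dtri n) v"
proof
  fix C
  have H: "\<forall>C\<in>pq_carrier R G. h C \<in> dcarrier n"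
    "\<forall>C. C \<notin> pq_carrier R G \<longrightarrow> h C = undefined"
    "\<forall>a b. gens a \<subseteq> G \<longrightarrow> gens b \<subseteq> G \<longrightarrow>
              h (qclass R (Tri a b)) = dtri n (h (qclass R a)) (h (qclass R b))"
    using assms(4) unfolding pointed_qhom_def by auto
  have ev: "gens t \<subseteq> G \<Longrightarrow> h (qclass R t) = qeval (dtri n) (dtri n) v t" for t
  proof (induction t)
    case (Gen x) then show ?case using assms(5) by simp
  next
    case (Tri a b) then show ?case using H(3) by simp
  next
    case (TriInv a b)
    have ga: "gens a \<subseteq> G" "gens b \<subseteq> G" using TriInv.prems by auto
    have X: "h (qclass R (TriInv a b)) \<in> dcarrier n"
      using H(1) TriInv.prems unfolding pq_carrier_def by blast
    have ceq: "qclass R (Tri (TriInv a b) b) = qclass R a" by (simp add: qclass_eq_iff qcong.rinv2)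
    have "h (qclass R (Tri (TriInv a b) b)) = dtri n (h (qclass R (TriInv a b))) (h (qclass R b))"
      using H(3) TriInv.prems ga(2) by blast
    hence "h (qclass R a) = dtri n (h (qclass R (TriInv a b))) (h (qclass R b))"
      by (simp only: ceq)
    hence "h (qclass R (TriInv a b)) = dtri n (h (qclass R a)) (h (qclass R b))"
      using m2[OF assms(1) X] by simp
    then show ?case using TriInv.IH ga by simp
  qed
  show "h C = ext_hom R G (dtri n) (dtri n) v C"
  proof (cases "C \<in> pq_carrier R G")
    case True
    then obtain t where "gens t \<subseteq> G" "C = qclass R t" by (auto simp: pq_carrier_def)
    then show ?thesis using ev ext_hom_eval[OF assms(1-3)] by simp
  next
    case False then show ?thesis using H(2) by (simp add: ext_hom_def)
  qed
qed


theorem theorem6p6: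
  fixes p n :: nat and y :: int
  assumes "0 < p" and "0 < n" and "y \<in> dcarrier n"
  defines "c \<equiv> gcd p n"
  defines "d \<equiv> n div c"
  defines "\<alpha> \<equiv> (\<lambda>k::nat. ext_hom (torus_rels p) (torus_gens p) (dtri n) (dtri n)
              (\<lambda>i. (y + int ((i - 1) mod p) * int (k * d)) mod int n))"
  defines "H \<equiv> pointed_qhom (torus_rels p) (torus_gens p) 1 (p + 1) (dcarrier n) (dtri n) y y"
  shows "H = \<alpha> ` {0..<c} \<and> inj_on \<alpha> {0..<c} \<and> card H = c"
proof -
  define R where "R = torus_rels p"
  define G where "G = torus_gens p"
  define v where "v k i = (y + int ((i - 1) mod p) * int (k * d)) mod int n" for k i :: nat
  have aeq: "\<alpha> k = ext_hom R G (dtri n) (dtri n) (v k)" for k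
    unfolding \<alpha>_def R_def G_def v_def by simp
  have c_pos: "0 < c" using assms(1) c_def by simp
  obtain p' where pc: "p = c * p'" unfolding c_def by (meson gcd_dvd1 dvdE)
  have nd: "n = c * d" unfolding d_def c_def by simp
  have cop: "coprime p' d"
  proof -
    have "coprime (p div gcd p n) (n div gcd p n)" using assms(1) by (intro div_gcd_coprime) simp
    moreover have "p div c = p'" using pc c_pos by simp
    ultimately show ?thesis unfolding d_def c_def by simp
  qed
  have yr: "0 \<le> y" "y < int n" using assms(3) by (auto simp: dcarrier_def)
  have ymod: "y mod int n = y" using yr by simp
  have vr: "\<forall>i. v k i \<in> dcarrier n" for k using assms(2) by (simp add: v_def dcarrier_def)
  have pe: "int p * int (k * d) = int n * int (p' * k)" for k
    using pc nd by (simp add: algebra_simps)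
  have Gi: "i \<in> G \<longleftrightarrow> 1 \<le> i \<and> i \<le> p + 1" for i by (simp add: G_def torus_gens_def)
  have v1: "v k 1 = y" for k using ymod by (simp add: v_def)
  have vp1: "v k (p+1) = y" for k using ymod by (simp add: v_def)
  have vle: "i \<le> p \<Longrightarrow> 1 \<le> i \<Longrightarrow> v k i = (y + (int i - 1) * int (k * d)) mod int n" for k i
    by (simp add: v_def of_nat_diff)
  have vrel: "\<forall>(a,b)\<in>R. qeval (dtri n) (dtri n) (v k) a = qeval (dtri n) (dtri n) (v k) b" for k
  proof (intro ballI, clarify)
    fix a b assume ab: "(a, b) \<in> R"
    let ?e = "int (k * d)"
    have pe': "(int p * ?e) mod int n = 0" unfolding pe[of k] by simp
    show "qeval (dtri n) (dtri n) (v k) a = qeval (dtri n) (dtri n) (v k) b"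
    proof (cases "a = Gen p \<and> b = Tri (Gen 2) (Gen (p + 1))")
      case True
      show ?thesis
      proof (cases "p = 1")
        case True
        then show ?thesis using \<open>a = Gen p \<and> _\<close> ymod by (simp add: v_def dtri_def)
      next
        case False
        hence p2: "2 \<le> p" using assms(1) by simp
        have "v k p = (y + (int p - 1) * ?e) mod int n" using vle[of p k] assms(1) by simp
        also have "\<dots> = ((y - ?e) + int p * ?e) mod int n" by (simp add: algebra_simps)
        also have "\<dots> = (y - ?e) mod int n" using pe' by (simp add: mod_add_right_eq[symmetric])
        also have "\<dots> = (2 * (y mod int n) - (y + ?e) mod int n) mod int n"
          by (simp add: m1)
        finally show ?thesis using True p2 vle[of 2 k] vp1[of k] ymod by (simp add: dtri_def)
      qed
    next
      case False
      then obtain i where i: "a = Gen i" "b = Tri (Gen (i + 2)) (Gen (i + 1))" "1 \<le> i" "i \<le> p - 1"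
        using ab unfolding R_def torus_rels_def by auto
      show ?thesis
      proof (cases "i + 2 \<le> p")
        case True
        have "v k i = (2 * (y + int i * ?e) - (y + (int i + 1) * ?e)) mod int n"
          using vle[of i k] i True by (simp add: algebra_simps)
        also have "\<dots> = (2 * ((y + int i * ?e) mod int n) - (y + (int i + 1) * ?e) mod int n) mod int n"
          by (simp add: m1)
        finally show ?thesis using i True vle[of "i+1" k] vle[of "i+2" k] by (simp add: dtri_def algebra_simps)
      next
        case False
        hence ip: "i + 2 = p + 1" "i + 1 = p" using i by auto
        have ii: "int i - 1 = int p - 2" using ip by simp
        have "v k i = (y + (int i - 1) * ?e) mod int n"
          using vle[of i k] i ip by simp
        also have "\<dots> = (y + (int p - 2) * ?e) mod int n" by (simp only: ii)
        also have "\<dots> = ((2 * (y + (int p - 1) * ?e) - y) + (- int p * ?e)) mod int n"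
          by (simp add: algebra_simps)
        also have "\<dots> = (2 * (y + (int p - 1) * ?e) - y) mod int n"
          using pe' by (metis mod_add_right_eq mod_minus_eq add.right_neutral minus_mult_left neg_equal_0_iff_equal mod_0)
        also have "\<dots> = (2 * ((y + (int p - 1) * ?e) mod int n) - y mod int n) mod int n"
          by (simp add: m1)
        finally show ?thesis using i ip vle[of p k] vp1[of k] assms(1) ymod
          by (simp add: dtri_def)
      qed
    qed
  qed
  have inH: "\<alpha> k \<in> H" for k
    unfolding aeq H_def R_def[symmetric] G_def[symmetric]
    by (rule ext_hom_in[OF assms(2) vr vrel v1 vp1]) (auto simp: Gi)
  have dpos: "0 < d" using nd assms(2) by (cases d) auto
  have copi: "coprime (int p') (int d)" using cop by simp
  have conv: "\<exists>k<c. h = \<alpha> k" if hH: "h \<in> H" for h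
  proof -
    have hH': "h \<in> pointed_qhom R G 1 (p + 1) (dcarrier n) (dtri n) y y"
      using hH unfolding H_def R_def G_def .
    have HH: "\<forall>C\<in>pq_carrier R G. h C \<in> dcarrier n"
      "\<forall>a b. gens a \<subseteq> G \<longrightarrow> gens b \<subseteq> G \<longrightarrow> h (qclass R (Tri a b)) = dtri n (h (qclass R a)) (h (qclass R b))"
      "h (qclass R (Gen 1)) = y" "h (qclass R (Gen (p+1))) = y"
      using hH' unfolding pointed_qhom_def by auto
    define a where "a i = h (qclass R (Gen i))" for i
    have ar: "a i \<in> dcarrier n" if "i \<in> G" for i
      using HH(1) that unfolding a_def pq_carrier_def by force
    have arel: "a (i+2) = dtri n (a i) (a (i+1))" if "1 \<le> i" "i \<le> p - 1" for i
    proof -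
      have "(Gen i, Tri (Gen (i + 2)) (Gen (i + 1))) \<in> R" using that unfolding R_def torus_rels_def by auto
      hence "qclass R (Gen i) = qclass R (Tri (Gen (i + 2)) (Gen (i + 1)))" by (simp add: qclass_eq_iff qcong.rel)
      moreover have "gens (Gen (i+2)) \<subseteq> G" "gens (Gen (i+1)) \<subseteq> G" using that by (auto simp: Gi)
      ultimately have "a i = dtri n (a (i+2)) (a (i+1))" unfolding a_def using HH(2) by simp
      moreover have "i + 2 \<in> G" using that by (auto simp: Gi)
      ultimately show ?thesis using m2[OF assms(2) ar[of "i+2"]] by simp
    qed
    define t where "t = a 2 - y"
    have prog: "(m + 1 \<le> p + 1 \<longrightarrow> a (m+1) = (y + int m * t) mod int n) \<and> (m + 2 \<le> p + 1 \<longrightarrow> a (m+2) = (y + (int m + 1) * t) mod int n)" for m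
    proof (induction m)
      case 0
      have "a 1 = y" using HH(3) a_def by simp
      moreover have "2 \<le> p + 1 \<Longrightarrow> a 2 mod int n = a 2" using ar[of 2] by (simp add: Gi dcarrier_def)
      ultimately show ?case using ymod by (simp add: t_def numeral_2_eq_2)
    next
      case (Suc m)
      have "m + 3 \<le> p + 1 \<Longrightarrow> a (m+3) = (y + (int m + 2) * t) mod int n"
      proof -
        assume le: "m + 3 \<le> p + 1"
        have "a (m+3) = dtri n (a (m+1)) (a (m+2))" using arel[of "m+1"] le by (simp add: numeral_3_eq_3)
        also have "\<dots> = (2 * ((y + (int m + 1) * t) mod int n) - (y + int m * t) mod int n) mod int n"
          using Suc le by (simp add: dtri_def)
        also have "\<dots> = (2 * (y + (int m + 1) * t) - (y + int m * t)) mod int n" by (rule m1)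
        also have "\<dots> = (y + (int m + 2) * t) mod int n" by (simp add: algebra_simps)
        finally show ?thesis .
      qed
      then show ?case using Suc by (simp add: numeral_3_eq_3 algebra_simps)
    qed
    have "(y + int p * t) mod int n = y mod int n" using prog[of p] HH(4) ymod a_def by simp
    hence "int n dvd int p * t" by (simp add: mod_eq_dvd_iff)
    hence "int c * int d dvd int c * (int p' * t)" using nd pc by (simp add: algebra_simps)
    hence "int d dvd int p' * t" using c_pos by simp
    hence "int d dvd t" using copi coprime_dvd_mult_right_iff coprime_commute by blast
    then obtain s where ts: "t = int d * s" by (auto simp: dvd_def)
    define k where "k = nat (s mod int c)"
    have ki: "int k = s mod int c" unfolding k_def using c_pos by simp
    have "s mod int c < int c" using c_pos by simp
    hence kc: "k < c" using ki by linarith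
    have tk: "t - int (k * d) = int n * (s div int c)"
    proof -
      have "t - int (k * d) = int d * (s - s mod int c)" using ts ki by (simp add: algebra_simps)
      also have "s - s mod int c = int c * (s div int c)" by (simp add: minus_mod_eq_mult_div)
      finally show ?thesis using nd by (simp add: algebra_simps)
    qed
    have hv: "\<forall>i\<in>G. h (qclass R (Gen i)) = v k i"
    proof
      fix i assume "i \<in> G"
      hence i: "1 \<le> i" "i \<le> p + 1" by (auto simp: Gi)
      show "h (qclass R (Gen i)) = v k i"
      proof (cases "i = p + 1")
        case True then show ?thesis using HH(4) vp1 by simp
      next
        case False
        hence ip: "i \<le> p" using i by simp
        have ai: "a i = (y + (int i - 1) * t) mod int n"
          using prog[of "i - 1"] i ip by (simp add: of_nat_diff)
        have "(y + (int i - 1) * t) - (y + (int i - 1) * int (k * d)) = int n * ((int i - 1) * (s div int c))"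
          using tk by (simp add: algebra_simps)
        hence "(y + (int i - 1) * t) mod int n = (y + (int i - 1) * int (k * d)) mod int n"
          by (simp add: mod_eq_dvd_iff)
        then show ?thesis using ai vle[of i k] ip i a_def by simp
      qed
    qed
    have "h = ext_hom R G (dtri n) (dtri n) (v k)"
      by (rule hom_unique[OF assms(2) vr vrel hH' hv])
    then show ?thesis using kc aeq[of k] by auto
  qed
  have HA: "H = \<alpha> ` {0..<c}"
  proof
    show "H \<subseteq> \<alpha> ` {0..<c}" using conv by fastforce
  qed (use inH in auto)
  have inj: "inj_on \<alpha> {0..<c}"
  proof (rule inj_onI)
    fix k1 k2 assume k: "k1 \<in> {0..<c}" "k2 \<in> {0..<c}" and eq: "\<alpha> k1 = \<alpha> k2"
    show "k1 = k2"
    proof (cases "p = 1")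
      case True
      hence "c = 1" unfolding c_def by simp
      then show ?thesis using k by simp
    next
      case False
      hence "2 \<in> G" using assms(1) by (simp add: Gi)
      hence g2: "gens (Gen 2) \<subseteq> G" by simp
      have "v k1 2 = v k2 2"
        using eq ext_hom_eval[OF assms(2) vr vrel g2, of k1] ext_hom_eval[OF assms(2) vr vrel g2, of k2] aeq[of k1] aeq[of k2] by simp
      hence "(y + int (k1 * d)) mod int n = (y + int (k2 * d)) mod int n"
        using False assms(1) by (simp add: v_def)
      hence "int n dvd int (k1 * d) - int (k2 * d)" by (simp add: mod_eq_dvd_iff)
      hence "int c * int d dvd (int k1 - int k2) * int d" using nd by (simp add: algebra_simps)
      hence "int c dvd int k1 - int k2" using dpos by simp
      hence "int k1 mod int c = int k2 mod int c" by (simp add: mod_eq_dvd_iff)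
      then show ?thesis using k by simp
    qed
  qed
  have "card H = c" using HA inj by (simp add: card_image)
  then show ?thesis using HA inj by simp
qed
end
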